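(* Let $C$ be an $E$-linear code of length $2n$. Then (1) $C^{\perp_{S_L}}=\kappa (C_{Res})^{\perp_S}\oplus \zeta (C_{Res})^{\perp_S}$; (2) $C^{\perp_{S_R}}=\kappa (C_{Tor})^{\perp_S}\oplus \zeta \mathbb{F}_2^{2n}$; (3) $C^{\perp_S}=\kappa (C_{Tor})^{\perp_S}\oplus \zeta (C_{Res})^{\perp_S}$.
   Context: $E=\langle \kappa,\tau \mid 2\kappa=2\tau=0,\ \kappa^2=\kappa,\ \tau^2=\tau,\ \kappa\tau=\kappa,\ \tau\kappa=\tau\rangle$ is the non-unital ring $\{0,\kappa,\tau,\zeta\}$, $\zeta=\kappa+\tau$, with $e\kappa=e\tau=e$, $e\zeta=0$ for all $e\in E$. Every $e\in E$ is uniquely $u\kappa+v\zeta$ ($u,v\in\mathbb{F}_2$); $\pi(u\kappa+v\zeta)=u$, componentwise. For $v\in\mathbb{F}_2^m$ and $e\in E$, $ev=(ev_1,\dots,ev_m)$ with $0\cdot e=0$, $1\cdot e=e$; for binary codes $A,B$, $\kappa A\oplus\zeta B=\{\kappa a+\zeta b: a\in A,b\in B\}$. An $E$-linear code of length $2n$ is a left $E$-submodule $C\subseteq E^{2n}$; $C_{Res}=\pi(C)$, $C_{Tor}=\{v\in\mathbb{F}_2^{2n}:\zeta v\in C\}$. Symplectic inner product (over $E$ or $\mathbb{F}_2$): $\langle (u|v),(u'|v')\rangle_s=\sum_i u_iv'_i+\sum_i v_iu'_i$. For binary $B$, $B^{\perp_S}=\{z\in\mathbb{F}_2^{2n}:\langle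 z,w\rangle_s=0\ \forall w\in B\}$. For $E$-linear $C$: $C^{\perp_{S_L}}=\{z\in E^{2n}:\langle z,w\rangle_s=0\ \forall w\in C\}$, $C^{\perp_{S_R}}=\{z\in E^{2n}:\langle w,z\rangle_s=0\ \forall w\in C\}$, $C^{\perp_S}=C^{\perp_{S_L}}\cap C^{\perp_{S_R}}$. *)

theory Defs
  imports Main "HOL-Library.Z2"
begin

datatype E = E0 | Kappa | Tau | Zeta

fun addE :: "E \<Rightarrow> E \<Rightarrow> E" where
  "addE E0 y = y"
| "addE Kappa E0 = Kappa" | "addE Kappa Kappa = E0" | "addE Kappa Tau = Zeta" | "addE Kappa Zeta = Tau"
| "addE Tau E0 = Tau" | "addE Tau Kappa = Zeta" | "addE Tau Tau = E0" | "addE Tau Zeta = Kappa"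
| "addE Zeta E0 = Zeta" | "addE Zeta Kappa = Tau" | "addE Zeta Tau = Kappa" | "addE Zeta Zeta = E0"

fun mulE :: "E \<Rightarrow> E \<Rightarrow> E" where
  "mulE x Kappa = x"
| "mulE x Tau = x"
| "mulE x Zeta = E0"
| "mulE x E0 = E0"

instantiation E :: "{ab_group_add, times}"
begin
definition "0 = E0"
definition "x + y = addE x y"
definition "x - y = addE x y"
definition "- x = (x::E)"
definition "x * y = mulE x y"
instance
proof
  fix a b c :: E
  show "a + b + c = a + (b + c)" unfolding plus_E_def by (cases a; cases b; cases c) simp_all
  show "a + b = b + a" unfolding plus_E_def by (cases a; cases b) simp_all
  show "0 + a = a" unfolding plus_E_def zero_E_def by simp
  show "- a + a = 0" unfolding plus_E_def zero_E_def uminus_E_def by (cases a) simp_all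
  show "a - b = a + - b" unfolding plus_E_def minus_E_def uminus_E_def by simp
qed
end

definition bsmul :: "bit \<Rightarrow> E \<Rightarrow> E" where
  "bsmul u e = (if u = 0 then 0 else e)"

definition evec :: "E \<Rightarrow> (nat \<Rightarrow> bit) \<Rightarrow> (nat \<Rightarrow> E)" where
  "evec e v = (\<lambda>i. bsmul (v i) e)"

text \<open>Reduction map pi(u kappa + v zeta) = u.\<close>
fun piE :: "E \<Rightarrow> bit" where
  "piE E0 = 0" | "piE Kappa = 1" | "piE Tau = 1" | "piE Zeta = 0"

text \<open>Vectors of length m: functions on nat vanishing at indices \<ge> m (coordinates 0..m-1).\<close>
definition vecs :: "nat \<Rightarrow> (nat \<Rightarrow> 'a::zero) set" where
  "vecs m = {x. \<forall>i\<ge>m. x i = 0}"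

text \<open>Symplectic form on length-2n vectors: coordinates 0..n-1 are u, n..2n-1 are v.\<close>
definition sympl :: "nat \<Rightarrow> (nat \<Rightarrow> 'a::{comm_monoid_add,times}) \<Rightarrow> (nat \<Rightarrow> 'a) \<Rightarrow> 'a" where
  "sympl n x y = (\<Sum>i<n. x i * y (n + i)) + (\<Sum>i<n. x (n + i) * y i)"

definition E_linear :: "nat \<Rightarrow> (nat \<Rightarrow> E) set \<Rightarrow> bool" where
  "E_linear n C \<longleftrightarrow> C \<subseteq> vecs (2*n) \<and> (\<lambda>i. 0) \<in> C
     \<and> (\<forall>x\<in>C. \<forall>y\<in>C. (\<lambda>i. x i + y i) \<in> C)
     \<and> (\<forall>e::E. \<forall>x\<in>C. (\<lambda>i. e * x i) \<in> C)"

definition C_Res :: "(nat \<Rightarrow> E) set \<Rightarrow> (nat \<Rightarrow> bit) set" where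
  "C_Res C = (\<lambda>x. \<lambda>i. piE (x i)) ` C"

definition C_Tor :: "nat \<Rightarrow> (nat \<Rightarrow> E) set \<Rightarrow> (nat \<Rightarrow> bit) set" where
  "C_Tor n C = {v \<in> vecs (2*n). evec Zeta v \<in> C}"

definition bin_perpS :: "nat \<Rightarrow> (nat \<Rightarrow> bit) set \<Rightarrow> (nat \<Rightarrow> bit) set" where
  "bin_perpS n B = {z \<in> vecs (2*n). \<forall>w\<in>B. sympl n z w = 0}"

definition perpSL :: "nat \<Rightarrow> (nat \<Rightarrow> E) set \<Rightarrow> (nat \<Rightarrow> E) set" where
  "perpSL n C = {z \<in> vecs (2*n). \<forall>w\<in>C. sympl n z w = 0}"

definition perpSR :: "nat \<Rightarrow> (nat \<Rightarrow> E) set \<Rightarrow> (nat \<Rightarrow> E) set" where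
  "perpSR n C = {z \<in> vecs (2*n). \<forall>w\<in>C. sympl n w z = 0}"

definition perpS :: "nat \<Rightarrow> (nat \<Rightarrow> E) set \<Rightarrow> (nat \<Rightarrow> E) set" where
  "perpS n C = perpSL n C \<inter> perpSR n C"

definition kz_sum :: "(nat \<Rightarrow> bit) set \<Rightarrow> (nat \<Rightarrow> bit) set \<Rightarrow> (nat \<Rightarrow> E) set" where
  "kz_sum A B = {(\<lambda>i. evec Kappa a i + evec Zeta b i) | a b. a \<in> A \<and> b \<in> B}"

end

theory Submission
  imports Defs
begin

fun qE :: "E \<Rightarrow> bit" where
  "qE E0 = 0" | "qE Kappa = 0" | "qE Tau = 1" | "qE Zeta = 1"

lemma piE_add: "piE (x + y) = piE x + piE y"
  unfolding plus_E_def by (cases x; cases y) simp_all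

lemma qE_add: "qE (x + y) = qE x + qE y"
  unfolding plus_E_def by (cases x; cases y) simp_all

lemma piE_mul: "piE (x * y) = piE x * piE y"
  unfolding times_E_def by (cases x; cases y) simp_all

lemma qE_mul: "qE (x * y) = qE x * piE y"
  unfolding times_E_def by (cases x; cases y) simp_all

lemma piE_0[simp]: "piE 0 = 0" unfolding zero_E_def by simp
lemma qE_0[simp]: "qE 0 = 0" unfolding zero_E_def by simp

lemma E_zero_iff: "(x::E) = 0 \<longleftrightarrow> piE x = 0 \<and> qE x = 0"
  unfolding zero_E_def by (cases x) simp_all

lemma piE_sum: "piE (\<Sum>i<(n::nat). f i) = (\<Sum>i<n. piE (f i))"
  by (induction n) (simp_all add: piE_add)

lemma qE_sum: "qE (\<Sum>i<(n::nat). f i) = (\<Sum>i<n. qE (f i))"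
  by (induction n) (simp_all add: qE_add)

lemma piE_sympl: "piE (sympl n z w) = sympl n (\<lambda>i. piE (z i)) (\<lambda>i. piE (w i))"
  unfolding sympl_def by (simp add: piE_add piE_sum piE_mul)

lemma qE_sympl: "qE (sympl n z w) = sympl n (\<lambda>i. qE (z i)) (\<lambda>i. piE (w i))"
  unfolding sympl_def by (simp add: qE_add qE_sum qE_mul)

lemma sympl_zero_iff:
  "sympl n z w = 0 \<longleftrightarrow> sympl n (\<lambda>i. piE (z i)) (\<lambda>i. piE (w i)) = 0
      \<and> sympl n (\<lambda>i. qE (z i)) (\<lambda>i. piE (w i)) = 0"
  using E_zero_iff piE_sympl qE_sympl by metis

lemma sympl_bit_comm: "sympl n (a::nat \<Rightarrow> bit) b = sympl n b a"
  unfolding sympl_def by (subst add.commute) (simp only: mult.commute)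

lemma evec_pi: "piE (evec Kappa a i + evec Zeta b i) = a i"
  unfolding evec_def bsmul_def by (cases "a i"; cases "b i") (simp_all add: piE_add)

lemma evec_q: "qE (evec Kappa a i + evec Zeta b i) = b i"
  unfolding evec_def bsmul_def by (cases "a i"; cases "b i") (simp_all add: qE_add)

lemma decomp: "z i = evec Kappa (\<lambda>i. piE (z i)) i + evec Zeta (\<lambda>i. qE (z i)) i"
  unfolding evec_def bsmul_def plus_E_def zero_E_def by (cases "z i") simp_all

lemma kz_sum_char: "kz_sum A B = {z. (\<lambda>i. piE (z i)) \<in> A \<and> (\<lambda>i. qE (z i)) \<in> B}"
proof (intro set_eqI iffI)
  fix z assume "z \<in> kz_sum A B"
  then obtain a b where "a \<in> A" "b \<in> B" and z: "z = (\<lambda>i. evec Kappa a i + evec Zeta b i)"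
    unfolding kz_sum_def by blast
  then show "z \<in> {z. (\<lambda>i. piE (z i)) \<in> A \<and> (\<lambda>i. qE (z i)) \<in> B}"
    by (simp add: evec_pi evec_q)
next
  fix z assume "z \<in> {z. (\<lambda>i. piE (z i)) \<in> A \<and> (\<lambda>i. qE (z i)) \<in> B}"
  moreover have "z = (\<lambda>i. evec Kappa (\<lambda>i. piE (z i)) i + evec Zeta (\<lambda>i. qE (z i)) i)"
    using decomp by blast
  ultimately show "z \<in> kz_sum A B" unfolding kz_sum_def by blast
qed

lemma vecs_iff: "(z::nat\<Rightarrow>E) \<in> vecs m \<longleftrightarrow> (\<lambda>i. piE (z i)) \<in> vecs m \<and> (\<lambda>i. qE (z i)) \<in> vecs m"
  unfolding vecs_def using E_zero_iff by auto

lemma zeta_mul: "(\<lambda>i. Zeta * w i) = evec Zeta (\<lambda>i. piE (w i))"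
  unfolding evec_def bsmul_def times_E_def zero_E_def
  by (rule ext, case_tac "w i") simp_all

lemma zeta_q: "(\<lambda>i. w i + Kappa * w i) = evec Zeta (\<lambda>i. qE (w i))"
  unfolding evec_def bsmul_def times_E_def zero_E_def plus_E_def
  by (rule ext, case_tac "w i") simp_all

lemma pi_evec_zeta: "(\<lambda>i. piE (evec Zeta v i)) = (\<lambda>i. 0)"
  unfolding evec_def bsmul_def by auto

lemma q_evec_zeta: "(\<lambda>i. qE (evec Zeta v i)) = v"
  unfolding evec_def bsmul_def by (rule ext, case_tac "v i") auto

lemma sympl_zero_right: "sympl n (a::nat\<Rightarrow>bit) (\<lambda>i. 0) = 0"
  unfolding sympl_def by simp

lemma pi_vecs: "w \<in> vecs m \<Longrightarrow> (\<lambda>i. piE (w i)) \<in> vecs m"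
  using vecs_iff by blast

lemma q_vecs: "w \<in> vecs m \<Longrightarrow> (\<lambda>i. qE (w i)) \<in> vecs m"
  using vecs_iff by blast

theorem mainTheorem6:
  fixes n :: nat and C :: "(nat \<Rightarrow> E) set"
  assumes "E_linear n C"
  shows "perpSL n C = kz_sum (bin_perpS n (C_Res C)) (bin_perpS n (C_Res C))
    \<and> perpSR n C = kz_sum (bin_perpS n (C_Tor n C)) (vecs (2*n))
    \<and> perpS n C = kz_sum (bin_perpS n (C_Tor n C)) (bin_perpS n (C_Res C))"
proof -
  have Cv: "C \<subseteq> vecs (2*n)" and Cadd: "\<And>x y. x \<in> C \<Longrightarrow> y \<in> C \<Longrightarrow> (\<lambda>i. x i + y i) \<in> C"
    and Cmul: "\<And>e x. x \<in> C \<Longrightarrow> (\<lambda>i. e * x i) \<in> C"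
    using assms unfolding E_linear_def by auto
  have resT: "(\<lambda>i. piE (w i)) \<in> C_Tor n C" if "w \<in> C" for w
    using Cmul[OF that, of Zeta] zeta_mul[of w] pi_vecs[of w] Cv that
    unfolding C_Tor_def by auto
  have qT: "(\<lambda>i. qE (w i)) \<in> C_Tor n C" if "w \<in> C" for w
    using Cadd[OF that Cmul[OF that, of Kappa]] zeta_q[of w] q_vecs[of w] Cv that
    unfolding C_Tor_def by auto
  have Res_perp: "a \<in> bin_perpS n (C_Res C) \<longleftrightarrow> a \<in> vecs (2*n) \<and> (\<forall>w\<in>C. sympl n a (\<lambda>i. piE (w i)) = 0)" for a
    unfolding bin_perpS_def C_Res_def by auto
  have Tor_perp: "a \<in> bin_perpS n (C_Tor n C) \<longleftrightarrow> a \<in> vecs (2*n) \<and> (\<forall>w\<in>C. sympl n (\<lambda>i. piE (w i)) a = 0 \<and> sympl n (\<lambda>i. qE (w i)) a = 0)" for a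
  proof
    assume "a \<in> bin_perpS n (C_Tor n C)"
    then have av: "a \<in> vecs (2*n)" and ap: "\<And>v. v \<in> C_Tor n C \<Longrightarrow> sympl n a v = 0"
      unfolding bin_perpS_def by auto
    have "sympl n (\<lambda>i. piE (w i)) a = 0 \<and> sympl n (\<lambda>i. qE (w i)) a = 0" if "w \<in> C" for w
      using ap[OF resT[OF that]] ap[OF qT[OF that]] sympl_bit_comm[of n a] by simp
    then show "a \<in> vecs (2*n) \<and> (\<forall>w\<in>C. sympl n (\<lambda>i. piE (w i)) a = 0 \<and> sympl n (\<lambda>i. qE (w i)) a = 0)"
      using av by blast
  next
    assume A: "a \<in> vecs (2*n) \<and> (\<forall>w\<in>C. sympl n (\<lambda>i. piE (w i)) a = 0 \<and> sympl n (\<lambda>i. qE (w i)) a = 0)"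
    have "sympl n a v = 0" if "v \<in> C_Tor n C" for v
    proof -
      have "evec Zeta v \<in> C" using that unfolding C_Tor_def by auto
      then have "sympl n (\<lambda>i. qE (evec Zeta v i)) a = 0" using A by blast
      then show ?thesis using q_evec_zeta[of v] sympl_bit_comm by metis
    qed
    then show "a \<in> bin_perpS n (C_Tor n C)" using A unfolding bin_perpS_def by auto
  qed
  have ResTor: "bin_perpS n (C_Tor n C) \<subseteq> bin_perpS n (C_Res C)"
  proof
    fix a assume "a \<in> bin_perpS n (C_Tor n C)"
    then show "a \<in> bin_perpS n (C_Res C)" unfolding Tor_perp Res_perp
      using sympl_bit_comm[of n a] by simp
  qed
  have L: "perpSL n C = kz_sum (bin_perpS n (C_Res C)) (bin_perpS n (C_Res C))"
  proof (rule set_eqI)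
    fix z
    show "z \<in> perpSL n C \<longleftrightarrow> z \<in> kz_sum (bin_perpS n (C_Res C)) (bin_perpS n (C_Res C))"
      unfolding kz_sum_char perpSL_def mem_Collect_eq Res_perp
      using vecs_iff[of z "2*n"] sympl_zero_iff[of n z] by blast
  qed
  have R: "perpSR n C = kz_sum (bin_perpS n (C_Tor n C)) (vecs (2*n))"
  proof (rule set_eqI)
    fix z
    show "z \<in> perpSR n C \<longleftrightarrow> z \<in> kz_sum (bin_perpS n (C_Tor n C)) (vecs (2*n))"
      unfolding kz_sum_char perpSR_def mem_Collect_eq Tor_perp
      using vecs_iff[of z "2*n"] sympl_zero_iff[of n _ z] by blast
  qed
  have S: "perpS n C = kz_sum (bin_perpS n (C_Tor n C)) (bin_perpS n (C_Res C))"
  proof (rule set_eqI)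
    fix z
    show "z \<in> perpS n C \<longleftrightarrow> z \<in> kz_sum (bin_perpS n (C_Tor n C)) (bin_perpS n (C_Res C))"
      unfolding perpS_def L R kz_sum_char Int_iff mem_Collect_eq
      using ResTor unfolding bin_perpS_def by blast
  qed
  show ?thesis using L R S by blast
qed

end
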